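(* Let $n_1,n_2\ge 3$, let $\Gamma=C_{n_1}\Box C_{n_2}$ where all edges of the cycle $C_{n_1}$ have length $\ell_1>0$ and all edges of $C_{n_2}$ have length $\ell_2>0$, with $G=G_{n_1}\times G_{n_2}$ acting by the rotations. For $s\in\{0,\dots,n_1-1\}$, $t\in\{0,\dots,n_2-1\}$ put $a_s=\omega_1^s+\omega_1^{-s}=2\cos(2\pi s/n_1)$, $b_t=\omega_2^t+\omega_2^{-t}=2\cos(2\pi t/n_2)$ and $$\Sigma_{s,t}(k)=1-\tfrac12 a_s e^{ik\ell_1}-\tfrac12 b_t e^{ik\ell_2}+\tfrac12 a_s e^{ik(\ell_1+2\ell_2)}+\tfrac12 b_t e^{ik(2\ell_1+\ell_2)}-e^{2ik(\ell_1+\ell_2)}.$$ Then for every real $k\neq0$, $k^2$ is an eigenvalue of $\mathscr H_{s,t}$ if and only if $\Sigma_{s,t}(k)=0$.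
   Context: $C_n$ denotes the cycle graph on $n$ vertices $w_0,\dots,w_{n-1}$ with edges $w_jw_{j+1}$ (indices mod $n$); the cyclic group $G_n=\langle g\rangle$ acts by the rotation $g w_j=w_{j+1}$, mapping edges isometrically onto edges. The Cartesian product metric graph $\Gamma_{n_1}\Box\Gamma_{n_2}$ has vertex set $V(\Gamma_{n_1})\times V(\Gamma_{n_2})$; $(u,v)$ and $(u',v')$ are joined iff either $u=u'$ and $v\sim v'$ in $\Gamma_{n_2}$ (length of $vv'$), or $v=v'$ and $u\sim u'$ in $\Gamma_{n_1}$ (length of $uu'$). $G=G_{n_1}\times G_{n_2}$, $G_{n_i}=\langle g_i\rangle$, acts by $(g_1^\kappa,g_2^\iota)(u,v)=(g_1^\kappa u,g_2^\iota v)$, extended isometrically to edges; $(T_hf)(y)=f(hy)$ on $L^2(\Gamma)$ (functions square integrable on each edge). $\omega_i=e^{2\pi i/n_i}$; $\tau_{s,t}(g_1^\kappa,g_2^\iota)=\omega_1^{s\kappa}\omega_2^{t\iota}$; $\mathcal F_{s,t}=\{f\in L^2(\Gamma):T_hf=\overline{\tau_{s,t}(h)}f\ \forall h\in G\}$. Standard vertex conditions at a vertex $v$: continuity of $f$ at $v$ and $\sum_{e\ni v}f'|_e(v)=0$ with derivatives pointing into the edges. $\mathscr H=-d^2/dx^2$ on each edge with domain the functions that are $H^2$ on each edge and satisfy the standard conditions at all vertices. $\mathscr H_{s,t}$ is the restriction of $\mathscr H$ to $\mathcal D(\mathscr H)\cap\mathcal F_{s,t}$, a self-adjoint operator in $\mathcal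 F_{s,t}$. *)

theory Defs
  imports "HOL-Analysis.Analysis"
begin

text \<open>Hor i j joins vertex (i,j) (at parameter 0) to vertex ((i+1) mod n1, j) (at parameter l1);
  Ver i j joins vertex (i,j) (at parameter 0) to vertex (i, (j+1) mod n2) (at parameter l2).\<close>
datatype cedge = Hor nat nat | Ver nat nat

definition edges :: "nat \<Rightarrow> nat \<Rightarrow> cedge set" where
  "edges n1 n2 = {Hor i j | i j. i < n1 \<and> j < n2} \<union> {Ver i j | i j. i < n1 \<and> j < n2}"

fun elen :: "real \<Rightarrow> real \<Rightarrow> cedge \<Rightarrow> real" where
  "elen l1 l2 (Hor i j) = l1"
| "elen l1 l2 (Ver i j) = l2"

fun act :: "nat \<Rightarrow> nat \<Rightarrow> nat \<Rightarrow> nat \<Rightarrow> cedge \<Rightarrow> cedge" where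
  "act n1 n2 \<kappa> \<iota> (Hor i j) = Hor ((i + \<kappa>) mod n1) ((j + \<iota>) mod n2)"
| "act n1 n2 \<kappa> \<iota> (Ver i j) = Ver ((i + \<kappa>) mod n1) ((j + \<iota>) mod n2)"

definition omega :: "nat \<Rightarrow> complex" where
  "omega n = exp (2 * of_real pi * \<i> / of_nat n)"

text \<open>u \<in> H^2(0,L), with (classical, one-sided at endpoints) derivative u' and
  weak second derivative u'' \<in> L^2: u' is absolutely continuous with u' x = u' 0 + \<integral>_0^x u''.\<close>
definition H2_edge :: "real \<Rightarrow> (real \<Rightarrow> complex) \<Rightarrow> (real \<Rightarrow> complex) \<Rightarrow> (real \<Rightarrow> complex) \<Rightarrow> bool" where
  "H2_edge L u u' u'' \<longleftrightarrow>
     (\<forall>x\<in>{0..L}. (u has_vector_derivative u' x) (at x within {0..L})) \<and>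
     u'' absolutely_integrable_on {0..L} \<and>
     (\<lambda>x. (norm (u'' x))^2) integrable_on {0..L} \<and>
     (\<forall>x\<in>{0..L}. (u'' has_integral (u' x - u' 0)) {0..x})"

text \<open>Standard (continuity + Kirchhoff) conditions at every vertex (i,j);
  derivatives point into the edges.\<close>
definition std_conditions ::
  "nat \<Rightarrow> nat \<Rightarrow> real \<Rightarrow> real \<Rightarrow> (cedge \<Rightarrow> real \<Rightarrow> complex) \<Rightarrow> (cedge \<Rightarrow> real \<Rightarrow> complex) \<Rightarrow> bool" where
  "std_conditions n1 n2 l1 l2 f f' \<longleftrightarrow>
     (\<forall>i<n1. \<forall>j<n2.
        f (Hor i j) 0 = f (Hor ((i + n1 - 1) mod n1) j) l1 \<and>
        f (Hor i j) 0 = f (Ver i j) 0 \<and>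
        f (Hor i j) 0 = f (Ver i ((j + n2 - 1) mod n2)) l2 \<and>
        f' (Hor i j) 0 - f' (Hor ((i + n1 - 1) mod n1) j) l1
          + f' (Ver i j) 0 - f' (Ver i ((j + n2 - 1) mod n2)) l2 = 0)"

text \<open>f \<in> F_{s,t}: T_h f = conj(tau_{s,t}(h)) f (as L^2 functions) for all h = (g1^kappa, g2^iota).\<close>
definition in_F ::
  "nat \<Rightarrow> nat \<Rightarrow> real \<Rightarrow> real \<Rightarrow> nat \<Rightarrow> nat \<Rightarrow> (cedge \<Rightarrow> real \<Rightarrow> complex) \<Rightarrow> bool" where
  "in_F n1 n2 l1 l2 s t f \<longleftrightarrow>
     (\<forall>\<kappa> \<iota>. \<forall>e\<in>edges n1 n2.
        AE x in lebesgue. x \<in> {0..elen l1 l2 e} \<longrightarrow>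
          f (act n1 n2 \<kappa> \<iota> e) x = cnj (omega n1 ^ (s * \<kappa>) * omega n2 ^ (t * \<iota>)) * f e x)"

definition is_eigenvalue_Hst ::
  "nat \<Rightarrow> nat \<Rightarrow> real \<Rightarrow> real \<Rightarrow> nat \<Rightarrow> nat \<Rightarrow> real \<Rightarrow> bool" where
  "is_eigenvalue_Hst n1 n2 l1 l2 s t lam \<longleftrightarrow>
     (\<exists>f f' f''.
        (\<forall>e\<in>edges n1 n2. H2_edge (elen l1 l2 e) (f e) (f' e) (f'' e)) \<and>
        std_conditions n1 n2 l1 l2 f f' \<and>
        in_F n1 n2 l1 l2 s t f \<and>
        (\<exists>e\<in>edges n1 n2. \<not> (AE x in lebesgue. x \<in> {0..elen l1 l2 e} \<longrightarrow> f e x = 0)) \<and>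
        (\<forall>e\<in>edges n1 n2. AE x in lebesgue. x \<in> {0..elen l1 l2 e} \<longrightarrow>
            - f'' e x = of_real lam * f e x))"

definition Sigma_st :: "nat \<Rightarrow> nat \<Rightarrow> real \<Rightarrow> real \<Rightarrow> nat \<Rightarrow> nat \<Rightarrow> real \<Rightarrow> complex" where
  "Sigma_st n1 n2 l1 l2 s t k =
     (let a = complex_of_real (2 * cos (2 * pi * real s / real n1));
          b = complex_of_real (2 * cos (2 * pi * real t / real n2));
          E = (\<lambda>L. exp (\<i> * complex_of_real (k * L)))
      in 1 - a / 2 * E l1 - b / 2 * E l2 + a / 2 * E (l1 + 2 * l2)
           + b / 2 * E (2 * l1 + l2) - E (2 * (l1 + l2)))"

end

theory Submission
  imports Defs
begin

lemma d_cos: "((\<lambda>x. complex_of_real (cos (k*x))) has_vector_derivative (- (of_real k * of_real (sin (k*x))))) (at x within S)"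
proof -
  have "((\<lambda>x. cos (k*x)) has_field_derivative (- (k * sin (k*x)))) (at x within S)"
    by (auto intro!: derivative_eq_intros)
  from has_vector_derivative_of_real[OF this] show ?thesis by simp
qed

lemma d_sin: "((\<lambda>x. complex_of_real (sin (k*x))) has_vector_derivative (of_real k * of_real (cos (k*x)))) (at x within S)"
proof -
  have "((\<lambda>x. sin (k*x)) has_field_derivative (k * cos (k*x))) (at x within S)"
    by (auto intro!: derivative_eq_intros)
  from has_vector_derivative_of_real[OF this] show ?thesis by simp
qed

lemma ae_negl:
  assumes "AE x in lebesgue. P x"
  obtains N where "negligible N" "\<And>x. x \<notin> N \<Longrightarrow> P x"
proof -
  from assms obtain N where N: "{x \<in> space lebesgue. \<not> P x} \<subseteq> N" "emeasure lebesgue N = 0" "N \<in> sets lebesgue"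
    by (rule AE_E)
  have "negligible N" unfolding negligible_iff_null_sets using N by (simp add: null_setsI)
  moreover have "\<And>x. x \<notin> N \<Longrightarrow> P x" using N(1) by auto
  ultimately show ?thesis using that by blast
qed

lemma ae_zero_cont:
  fixes g :: "real \<Rightarrow> complex"
  assumes cont: "continuous_on {0..L} g" and L: "0 < L"
    and ae: "AE x in lebesgue. x \<in> {0..L} \<longrightarrow> g x = 0" and x: "x \<in> {0..L}"
  shows "g x = 0"
proof -
  obtain N where N: "negligible N" "\<And>x. x \<notin> N \<Longrightarrow> x \<in> {0..L} \<longrightarrow> g x = 0"
    using ae_negl[OF ae] by blast
  have int0: "integral {0..y} g = 0" if y: "y \<in> {0..L}" for y
  proof -
    have "(g has_integral 0) {0..y}"
      by (rule has_integral_spike[OF N(1), where f="\<lambda>_. 0"]) (use N(2) y in auto)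
    then show ?thesis by (simp add: integral_unique)
  qed
  have d1: "((\<lambda>u. integral {0..u} g) has_vector_derivative g x) (at x within {0..L})"
    by (rule integral_has_vector_derivative[OF cont x])
  have d2: "((\<lambda>u. integral {0..u} g) has_vector_derivative 0) (at x within {0..L})"
    by (rule has_vector_derivative_transform[OF x, of _ "\<lambda>_. 0"]) (auto simp: int0)
  show ?thesis
    using vector_derivative_unique_within_closed_interval[of 0 L x, OF L] d1 d2 x by auto
qed

lemma ode_closed:
  fixes u u' u'' :: "real \<Rightarrow> complex" and k L :: real
  assumes k: "k \<noteq> 0" and H: "H2_edge L u u' u''"
    and ae: "AE x in lebesgue. x \<in> {0..L} \<longrightarrow> - u'' x = of_real (k^2) * u x"
    and x: "x \<in> {0..L}"
  shows "u x = u 0 * of_real (cos (k*x)) + (u' 0 / of_real k) * of_real (sin (k*x)) \<and>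
         u' x = of_real k * ((u' 0 / of_real k) * of_real (cos (k*x)) - u 0 * of_real (sin (k*x)))"
proof -
  define C where "C = (\<lambda>z. complex_of_real (cos (k*z)))"
  define S where "S = (\<lambda>z. complex_of_real (sin (k*z)))"
  define K where "K = complex_of_real k"
  have K0: "K \<noteq> 0" using k by (simp add: K_def)
  have dC: "\<And>y. (C has_vector_derivative (- (K * S y))) (at y within {0..L})"
    unfolding C_def S_def K_def by (rule d_cos)
  have dS: "\<And>y. (S has_vector_derivative (K * C y)) (at y within {0..L})"
    unfolding C_def S_def K_def by (rule d_sin)
  from H have du: "\<And>y. y \<in> {0..L} \<Longrightarrow> (u has_vector_derivative u' y) (at y within {0..L})"
    and int: "\<And>y. y \<in> {0..L} \<Longrightarrow> (u'' has_integral (u' y - u' 0)) {0..y}"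
    unfolding H2_edge_def by auto
  have contu: "continuous_on {0..L} u" by (rule continuous_on_vector_derivative[OF du])
  have contu2: "continuous_on {0..L} (\<lambda>z. - (K*K) * u z)"
    by (intro continuous_intros contu)
  obtain N where N: "negligible N" "\<And>x. x \<notin> N \<Longrightarrow> x \<in> {0..L} \<longrightarrow> - u'' x = of_real (k^2) * u x"
    using ae_negl[OF ae] by blast
  have u'eq: "u' y = u' 0 + integral {0..y} (\<lambda>z. - (K*K) * u z)" if y: "y \<in> {0..L}" for y
  proof -
    have "((\<lambda>z. - (K*K) * u z) has_integral (u' y - u' 0)) {0..y}"
    proof (rule has_integral_spike[OF N(1), where f=u''])
      show "(u'' has_integral u' y - u' 0) {0..y}" using int[OF y] .
      fix z assume "z \<in> {0..y} - N"
      then have "- u'' z = of_real (k^2) * u z" using N(2) y by auto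
      then show "- (K * K) * u z = u'' z" unfolding K_def
        by (simp add: power2_eq_square) (metis minus_equation_iff)
    qed
    then have I: "integral {0..y} (\<lambda>z. - (K*K) * u z) = u' y - u' 0" by (rule integral_unique)
    show ?thesis by (simp only: I) simp
  qed
  have du': "(u' has_vector_derivative (- (K*K) * u y)) (at y within {0..L})" if y: "y \<in> {0..L}" for y
  proof -
    have "((\<lambda>v. u' 0 + integral {0..v} (\<lambda>z. - (K*K) * u z)) has_vector_derivative (0 + (- (K*K) * u y))) (at y within {0..L})"
      by (intro has_vector_derivative_add has_vector_derivative_const integral_has_vector_derivative contu2 y)
    then have D: "((\<lambda>v. u' 0 + integral {0..v} (\<lambda>z. - (K*K) * u z)) has_vector_derivative (- (K*K) * u y)) (at y within {0..L})"
      by (simp only: add_0_left)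
    show ?thesis
      apply (rule has_vector_derivative_transform[OF y _ D])
      apply (erule u'eq)
      done
  qed
  define P where "P = (\<lambda>z. u z * C z - u' z * S z / K)"
  define Q where "Q = (\<lambda>z. u z * S z + u' z * C z / K)"
  have dP: "(P has_vector_derivative 0) (at y within {0..L})" if y: "y \<in> {0..L}" for y
  proof -
    have "(P has_vector_derivative (u y * (- (K * S y)) + u' y * C y - (u' y * (K * C y) + (- (K*K) * u y) * S y) / K)) (at y within {0..L})"
      unfolding P_def
      by (intro has_vector_derivative_diff has_vector_derivative_mult has_vector_derivative_divide du du' dC dS y)
    moreover have "u y * (- (K * S y)) + u' y * C y - (u' y * (K * C y) + (- (K*K) * u y) * S y) / K = 0"
      using K0 by (simp add: field_simps)
    ultimately show ?thesis by simp
  qed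
  have dQ: "(Q has_vector_derivative 0) (at y within {0..L})" if y: "y \<in> {0..L}" for y
  proof -
    have "(Q has_vector_derivative (u y * (K * C y) + u' y * S y + (u' y * (- (K * S y)) + (- (K*K) * u y) * C y) / K)) (at y within {0..L})"
      unfolding Q_def
      by (intro has_vector_derivative_add has_vector_derivative_mult has_vector_derivative_divide du du' dC dS y)
    moreover have "u y * (K * C y) + u' y * S y + (u' y * (- (K * S y)) + (- (K*K) * u y) * C y) / K = 0"
      using K0 by (simp add: field_simps)
    ultimately show ?thesis by simp
  qed
  have x0: "0 \<in> {0..L}" using x by auto
  obtain cP where cP: "\<And>y. y \<in> {0..L} \<Longrightarrow> P y = cP"
    using has_vector_derivative_zero_constant[of "{0..L}" P] dP by auto
  obtain cQ where cQ: "\<And>y. y \<in> {0..L} \<Longrightarrow> Q y = cQ"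
    using has_vector_derivative_zero_constant[of "{0..L}" Q] dQ by auto
  have P0: "P 0 = u 0" by (simp add: P_def C_def S_def)
  have Q0: "Q 0 = u' 0 / K" by (simp add: Q_def C_def S_def)
  have Px: "P x = u 0" using cP[OF x] cP[OF x0] P0 by simp
  have Qx: "Q x = u' 0 / K" using cQ[OF x] cQ[OF x0] Q0 by simp
  have pyth: "C x * C x + S x * S x = 1"
  proof -
    have r: "cos (k*x) * cos (k*x) + sin (k*x) * sin (k*x) = 1"
      using sin_cos_squared_add[of "k*x"] by (simp add: power2_eq_square)
    have "complex_of_real (cos (k*x) * cos (k*x) + sin (k*x) * sin (k*x)) = 1" using r by simp
    then show ?thesis unfolding C_def S_def by (simp only: of_real_add of_real_mult)
  qed
  have e1': "P x * C x + Q x * S x = u x * (C x * C x + S x * S x)"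
    unfolding P_def Q_def using K0 by (simp add: field_simps)
  have e1: "u x = P x * C x + Q x * S x" using e1' pyth by simp
  have e2': "K * (Q x * C x - P x * S x) = u' x * (C x * C x + S x * S x)"
    unfolding P_def Q_def using K0 by (simp add: field_simps)
  have e2: "u' x = K * (Q x * C x - P x * S x)" using e2' pyth by simp
  show ?thesis using e1 e2 Px Qx unfolding C_def S_def K_def by simp
qed

lemma sig_id:
  fixes a b c1 s1 c2 s2 X Y :: complex
  assumes h1: "X*X = 2*c1*X - 1" and h2: "Y*Y = 2*c2*Y - 1"
    and h3: "X = c1 + \<i>* s1" and h4: "Y = c2 + \<i>* s2" and h5: "c1*c1 + s1* s1 = 1" and h6: "c2*c2 + s2* s2 = 1"
  shows "1 - a/2 * X - b/2 * Y + a/2 * (X * (Y*Y)) + b/2 * ((X*X) * Y) - (X*X) * (Y*Y)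
     = \<i> * X * Y * (s2 * (a - 2*c1) + s1 * (b - 2*c2))"
proof -
  have "1 - a/2 * X - b/2 * Y + a/2 * (X * (Y*Y)) + b/2 * ((X*X) * Y) - (X*X) * (Y*Y)
     = 1 - a/2 * X - b/2 * Y + a/2 * (X * (2*c2*Y - 1)) + b/2 * ((2*c1*X - 1) * Y) - (2*c1*X - 1) * (2*c2*Y - 1)"
    by (simp only: h1 h2)
  also have "\<dots> = X*(2*c1 - a) + Y*(2*c2 - b) + X*Y*(a*c2 + b*c1 - 4*c1*c2)"
    by algebra
  also have "\<dots> = X*Y*((c2 - \<i>* s2)*(2*c1 - a)) + X*Y*((c1 - \<i>* s1)*(2*c2 - b)) + X*Y*(a*c2 + b*c1 - 4*c1*c2)
       + X*(2*c1 - a) * (1 - Y*(c2 - \<i>* s2)) + Y*(2*c2 - b)*(1 - X*(c1 - \<i>* s1))"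
    by algebra
  also have "Y*(c2 - \<i>* s2) = 1"
  proof -
    have "(c2 + \<i>* s2)*(c2 - \<i>* s2) = c2*c2 - \<i>*\<i>*(s2* s2)" by algebra
    then show ?thesis unfolding h4 using h6 by simp
  qed
  also have "X*(c1 - \<i>* s1) = 1"
  proof -
    have "(c1 + \<i>* s1)*(c1 - \<i>* s1) = c1*c1 - \<i>*\<i>*(s1* s1)" by algebra
    then show ?thesis unfolding h3 using h5 by simp
  qed
  also have "X*Y*((c2 - \<i>* s2)*(2*c1 - a)) + X*Y*((c1 - \<i>* s1)*(2*c2 - b)) + X*Y*(a*c2 + b*c1 - 4*c1*c2)
       + X*(2*c1 - a) * (1 - 1) + Y*(2*c2 - b)*(1 - 1) = \<i> * X * Y * (s2 * (a - 2*c1) + s1 * (b - 2*c2))"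
    by algebra
  finally show ?thesis .
qed

lemma detA:
  fixes A B D p q c1 s1 c2 s2 :: complex
  defines "det0 \<equiv> q* s2*(1-p*c1)^2 + p* s1*(1-q*c2)^2 + p*q* s1* s2*(p* s1+q* s2)"
  assumes
    E1: "(1 - p*c1) * A - p* s1*B = 0" and
    E2: "(1 - q*c2) * A - q* s2*D = 0" and
    E3: "(p* s1 + q* s2) * A + (1 - p*c1) * B + (1 - q*c2) * D = 0"
  shows "det0 * A = 0" "det0 * B = 0" "det0 * D = 0"
proof -
  have "det0 * A = q* s2*(1-p*c1) * ((1 - p*c1) * A - p* s1*B) + p* s1*(1-q*c2) * ((1 - q*c2) * A - q* s2*D)
     + p*q* s1* s2 * ((p* s1 + q* s2) * A + (1 - p*c1) * B + (1 - q*c2) * D)"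
    unfolding det0_def by algebra
  then show "det0 * A = 0" using E1 E2 E3 by simp
  have "det0 * B = (- q* s2*(p* s1+q* s2) - (1-q*c2)^2) * ((1 - p*c1) * A - p* s1*B) + (1-p*c1)*(1-q*c2) * ((1 - q*c2) * A - q* s2*D)
     + (1-p*c1)*q* s2 * ((p* s1 + q* s2) * A + (1 - p*c1) * B + (1 - q*c2) * D)"
    unfolding det0_def by algebra
  then show "det0 * B = 0" using E1 E2 E3 by simp
  have "det0 * D = (1-q*c2)*(1-p*c1) * ((1 - p*c1) * A - p* s1*B) + (- p* s1*(p* s1+q* s2) - (1-p*c1)^2) * ((1 - q*c2) * A - q* s2*D)
     + p* s1*(1-q*c2) * ((p* s1 + q* s2) * A + (1 - p*c1) * B + (1 - q*c2) * D)"
    unfolding det0_def by algebra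
  then show "det0 * D = 0" using E1 E2 E3 by simp
qed

lemma det_K:
  fixes p q al be c1 s1 c2 s2 :: complex
  assumes "c1*c1 + s1* s1 = 1" "c2*c2 + s2* s2 = 1" "al * p = 1" "be * q = 1"
  shows "q* s2*(1-p*c1)^2 + p* s1*(1-q*c2)^2 + p*q* s1* s2*(p* s1+q* s2) = p*q*(s2*(al+p-2*c1) + s1*(be+q-2*c2))"
proof -
  have "q* s2*(1-p*c1)^2 + p* s1*(1-q*c2)^2 + p*q* s1* s2*(p* s1+q* s2) - p*q*(s2*(al+p-2*c1) + s1*(be+q-2*c2))
    = q* s2*p^2*(c1*c1+s1* s1-1) + q* s2*(1-al*p) + p* s1*q^2*(c2*c2+s2* s2-1) + p* s1*(1-be*q)"
    by algebra
  then show ?thesis using assms by simp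
qed

lemma pow_mod_eq: fixes x :: "'a::monoid_mult" assumes "x ^ n = 1" shows "x ^ (m mod n) = x ^ m"
proof -
  have "x ^ m = x ^ (n * (m div n) + m mod n)" by (metis div_mult_mod_eq mult.commute)
  also have "\<dots> = (x ^ n) ^ (m div n) * x ^ (m mod n)" by (simp only: power_add power_mult)
  finally show ?thesis using assms by simp
qed

lemma root_facts:
  fixes n s :: nat
  assumes n: "n \<ge> 1"
  defines "al \<equiv> cnj (omega n ^ s)"
  shows "al ^ n = 1" "al * al^(n-1) = 1" "al + al^(n-1) = complex_of_real (2 * cos (2*pi*real s/real n))"
proof -
  have om: "omega n = cis (2*pi/real n)"
    unfolding omega_def cis_conv_exp by (rule arg_cong[where f=exp]) (simp add: field_simps)
  have omn: "omega n ^ n = 1" unfolding om Complex.DeMoivre using n by simp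
  show aln: "al ^ n = 1"
    unfolding al_def by (simp add: complex_cnj_power[symmetric] power_mult[symmetric] mult.commute[of s n] power_mult omn del: complex_cnj_power)
  show al1: "al * al^(n-1) = 1"
    using aln n by (metis Suc_diff_1 le_eq_less_or_eq less_one not_less power_Suc zero_less_one le_less_trans)
  have alc: "al = cis (- (real s * (2*pi/real n)))"
    unfolding al_def om Complex.DeMoivre cis_cnj ..
  have "al^(n-1) = inverse al" using al1 by (metis inverse_unique)
  then have "al + al^(n-1) = cis (- (real s * (2*pi/real n))) + cis (real s * (2*pi/real n))"
    by (simp add: alc)
  also have "\<dots> = complex_of_real (2 * cos (2*pi*real s/real n))"
    by (simp add: complex_eq_iff mult.commute)
  finally show "al + al^(n-1) = complex_of_real (2 * cos (2*pi*real s/real n))" .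
qed

lemma trig_ae_zero:
  fixes A B :: complex and k L :: real
  assumes L: "0 < L" and k: "k \<noteq> 0"
    and ae: "AE x in lebesgue. x \<in> {0..L} \<longrightarrow> A * of_real (cos (k*x)) + B * of_real (sin (k*x)) = 0"
  shows "A = 0 \<and> B = 0"
proof -
  have cont: "continuous_on {0..L} (\<lambda>x. A * of_real (cos (k*x)) + B * of_real (sin (k*x)))"
    by (intro continuous_intros)
  have z: "A * of_real (cos (k*x)) + B * of_real (sin (k*x)) = 0" if "x \<in> {0..L}" for x
    using ae_zero_cont[OF cont L ae that] .
  have A0: "A = 0" using z[of 0] L by simp
  define x0 where "x0 = min L (1 / \<bar>k\<bar>)"
  have x0: "x0 \<in> {0..L}" "0 < x0" "x0 \<le> 1 / \<bar>k\<bar>" using L k by (auto simp: x0_def)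
  have sn: "sin (k * x0) \<noteq> 0"
  proof
    assume "sin (k * x0) = 0"
    then obtain i :: int where i: "k * x0 = of_int i * pi" by (auto simp: sin_zero_iff_int2)
    have "\<bar>k * x0\<bar> \<le> 1" using x0 k by (simp add: abs_mult field_simps)
    moreover have "k * x0 \<noteq> 0" using x0 k by simp
    then have "i \<noteq> 0" using i by auto
    then have "\<bar>of_int i * pi\<bar> \<ge> pi" by (simp add: abs_mult)
    ultimately show False using i pi_gt3 by linarith
  qed
  have "B * of_real (sin (k*x0)) = 0" using z[OF x0(1)] A0 by simp
  then have "B = 0" using sn by simp
  then show ?thesis using A0 by simp
qed

lemma null_vec:
  fixes p q c1 s1 c2 s2 :: complex
  assumes p: "p \<noteq> 0" and q: "q \<noteq> 0"
    and det: "q * s2*(1-p*c1)^2 + p * s1*(1-q*c2)^2 + p*q * s1 * s2*(p * s1+q * s2) = 0"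
  shows "\<exists>A B D. (A \<noteq> 0 \<or> B \<noteq> 0 \<or> D \<noteq> 0) \<and>
     (1 - p*c1) * A - p * s1*B = 0 \<and>
     (1 - q*c2) * A - q * s2*D = 0 \<and>
     (p * s1 + q * s2) * A + (1 - p*c1) * B + (1 - q*c2) * D = 0"
proof (cases "s1 \<noteq> 0 \<and> s2 \<noteq> 0")
  case gen: True
  let ?B = "(1-p*c1)/(p * s1)" and ?D = "(1-q*c2)/(q * s2)"
  have e1: "(1 - p*c1) * 1 - p * s1*?B = 0" using gen p by simp
  have e2: "(1 - q*c2) * 1 - q * s2*?D = 0" using gen q by simp
  have "((p * s1 + q * s2) * 1 + (1 - p*c1) * ?B + (1 - q*c2) * ?D) * (p*q * s1 * s2)
    = q * s2*(1-p*c1)^2 + p * s1*(1-q*c2)^2 + p*q * s1 * s2*(p * s1+q * s2)"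
    using gen p q by (simp add: field_simps power2_eq_square)
  then have e3: "(p * s1 + q * s2) * 1 + (1 - p*c1) * ?B + (1 - q*c2) * ?D = 0"
    using det gen p q by simp
  show ?thesis
    apply (rule exI[where x=1], rule exI[where x="?B"], rule exI[where x="?D"])
    using e1 e2 e3 by simp
next
  case False
  consider (c1) "1 - p*c1 = 0" "s1 = 0" | (c2) "1 - q*c2 = 0" "s2 = 0"
    | (both) "s1 = 0" "s2 = 0" "1 - p*c1 \<noteq> 0"
    | (bad1) "s1 = 0" "s2 \<noteq> 0" "1 - p*c1 \<noteq> 0" | (bad2) "s2 = 0" "s1 \<noteq> 0" "1 - q*c2 \<noteq> 0"
    using False by fastforce
  then show ?thesis
  proof cases
    case c1
    show ?thesis
      apply (rule exI[where x=0], rule exI[where x=1], rule exI[where x=0])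
      using c1 by simp
  next
    case c2
    show ?thesis
      apply (rule exI[where x=0], rule exI[where x=0], rule exI[where x=1])
      using c2 by simp
  next
    case both
    show ?thesis
      apply (rule exI[where x=0], rule exI[where x="1-q*c2"], rule exI[where x="-(1-p*c1)"])
      using both by (simp add: algebra_simps)
  next
    case bad1
    then have "q * s2*(1-p*c1)^2 \<noteq> 0" using q by simp
    then show ?thesis using det bad1 by simp
  next
    case bad2
    then have "p * s1*(1-q*c2)^2 \<noteq> 0" using p by simp
    then show ?thesis using det bad2 by simp
  qed
qed

lemma pyth_c: "complex_of_real (cos x) * complex_of_real (cos x) + complex_of_real (sin x) * complex_of_real (sin x) = 1"
proof -
  have r: "cos x * cos x + sin x * sin x = 1"
    using sin_cos_squared_add[of x] by (simp add: power2_eq_square)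
  have "complex_of_real (cos x * cos x + sin x * sin x) = 1" using r by simp
  then show ?thesis by (simp only: of_real_add of_real_mult)
qed

lemma cis_sq: "cis x * cis x = 2 * complex_of_real (cos x) * cis x - 1"
proof -
  have a: "cis x = complex_of_real (cos x) + \<i> * complex_of_real (sin x)" by (simp add: complex_eq_iff)
  have "(complex_of_real (cos x) + \<i> * complex_of_real (sin x)) * (complex_of_real (cos x) + \<i> * complex_of_real (sin x))
     = 2 * complex_of_real (cos x) * (complex_of_real (cos x) + \<i> * complex_of_real (sin x)) - (complex_of_real (cos x) * complex_of_real (cos x) - \<i> * \<i> * (complex_of_real (sin x) * complex_of_real (sin x)))"
    by algebra
  also have "complex_of_real (cos x) * complex_of_real (cos x) - \<i> * \<i> * (complex_of_real (sin x) * complex_of_real (sin x)) = 1"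
    using pyth_c[of x] by simp
  finally show ?thesis unfolding a[symmetric] by simp
qed

lemma sigma_K:
  "Sigma_st n1 n2 l1 l2 s t k = \<i> * cis (k*l1) * cis (k*l2) *
     complex_of_real (sin (k*l2) * (2 * cos (2 * pi * real s / real n1) - 2 * cos (k*l1))
                    + sin (k*l1) * (2 * cos (2 * pi * real t / real n2) - 2 * cos (k*l2)))"
proof -
  define X where "X = cis (k*l1)"
  define Y where "Y = cis (k*l2)"
  define a where "a = complex_of_real (2 * cos (2 * pi * real s / real n1))"
  define b where "b = complex_of_real (2 * cos (2 * pi * real t / real n2))"
  have E: "exp (\<i> * complex_of_real (k * L)) = cis (k * L)" for L by (simp add: cis_conv_exp)
  have E1: "cis (k * (l1 + 2 * l2)) = X * (Y * Y)" unfolding X_def Y_def cis_mult by (simp add: algebra_simps)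
  have E2: "cis (k * (2 * l1 + l2)) = (X * X) * Y" unfolding X_def Y_def cis_mult by (simp add: algebra_simps)
  have E3: "cis (k * (2 * (l1 + l2))) = (X * X) * (Y * Y)" unfolding X_def Y_def cis_mult by (simp add: algebra_simps)
  have "Sigma_st n1 n2 l1 l2 s t k = 1 - a/2 * X - b/2 * Y + a/2 * (X * (Y*Y)) + b/2 * ((X*X) * Y) - (X*X) * (Y*Y)"
    unfolding Sigma_st_def Let_def E E1 E2 E3 a_def b_def X_def Y_def by simp
  also have "\<dots> = \<i> * X * Y * (complex_of_real (sin (k*l2)) * (a - 2*complex_of_real (cos (k*l1))) + complex_of_real (sin (k*l1)) * (b - 2*complex_of_real (cos (k*l2))))"
    by (rule sig_id) (simp_all add: X_def Y_def cis_sq pyth_c complex_eq_iff)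
  also have "\<dots> = \<i> * cis (k*l1) * cis (k*l2) *
     complex_of_real (sin (k*l2) * (2 * cos (2 * pi * real s / real n1) - 2 * cos (k*l1))
                    + sin (k*l1) * (2 * cos (2 * pi * real t / real n2) - 2 * cos (k*l2)))"
    by (simp add: X_def Y_def a_def b_def)
  finally show ?thesis .
qed

definition trg :: "real \<Rightarrow> complex \<Rightarrow> complex \<Rightarrow> real \<Rightarrow> complex" where
  "trg k A B x = A * complex_of_real (cos (k*x)) + B * complex_of_real (sin (k*x))"
definition dtrg :: "real \<Rightarrow> complex \<Rightarrow> complex \<Rightarrow> real \<Rightarrow> complex" where
  "dtrg k A B x = complex_of_real k * (B * complex_of_real (cos (k*x)) - A * complex_of_real (sin (k*x)))"

lemma d_trg: "((\<lambda>x. c * trg k A B x) has_vector_derivative (c * dtrg k A B x)) (at x within S)"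
proof -
  have "((\<lambda>x. c * trg k A B x) has_vector_derivative (c * (A * (- (of_real k * of_real (sin (k*x)))) + B * (of_real k * of_real (cos (k*x)))))) (at x within S)"
    unfolding trg_def by (intro has_vector_derivative_mult_right has_vector_derivative_add d_cos d_sin)
  then show ?thesis by (simp add: dtrg_def algebra_simps)
qed

lemma d_dtrg: "((\<lambda>x. c * dtrg k A B x) has_vector_derivative (- complex_of_real (k^2) * (c * trg k A B x))) (at x within S)"
proof -
  have "((\<lambda>x. c * dtrg k A B x) has_vector_derivative (c * (of_real k * (B * (- (of_real k * of_real (sin (k*x)))) - A * (of_real k * of_real (cos (k*x))))))) (at x within S)"
    unfolding dtrg_def by (intro has_vector_derivative_mult_right has_vector_derivative_diff d_cos d_sin)
  moreover have "c * (of_real k * (B * (- (of_real k * of_real (sin (k*x)))) - A * (of_real k * of_real (cos (k*x)))))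
      = - complex_of_real (k^2) * (c * trg k A B x)"
    by (simp add: trg_def algebra_simps power2_eq_square)
  ultimately show ?thesis by simp
qed

lemma h2_trg: "H2_edge L (\<lambda>x. c * trg k A B x) (\<lambda>x. c * dtrg k A B x) (\<lambda>x. - complex_of_real (k^2) * (c * trg k A B x))"
  unfolding H2_edge_def
proof (intro conjI ballI)
  show "((\<lambda>x. c * trg k A B x) has_vector_derivative c * dtrg k A B x) (at x within {0..L})" for x
    by (rule d_trg)
  have cont: "continuous_on {0..L} (\<lambda>x. - complex_of_real (k^2) * (c * trg k A B x))"
    unfolding trg_def by (intro continuous_intros)
  show "(\<lambda>x. - complex_of_real (k^2) * (c * trg k A B x)) absolutely_integrable_on {0..L}"
    by (rule absolutely_integrable_continuous_real[OF cont])
  show "(\<lambda>x. (norm (- complex_of_real (k^2) * (c * trg k A B x)))^2) integrable_on {0..L}"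
    by (intro integrable_continuous_real continuous_intros cont)
  fix x assume x: "x \<in> {0..L}"
  show "((\<lambda>x. - complex_of_real (k^2) * (c * trg k A B x)) has_integral c * dtrg k A B x - c * dtrg k A B 0) {0..x}"
    using x by (intro fundamental_theorem_of_calculus d_dtrg) auto
qed

lemma edges_mem: "Hor i j \<in> edges n1 n2 \<longleftrightarrow> i < n1 \<and> j < n2" "Ver i j \<in> edges n1 n2 \<longleftrightarrow> i < n1 \<and> j < n2"
  by (auto simp: edges_def)

lemma cnj_fac: "cnj (omega n1 ^ (s * \<kappa>) * omega n2 ^ (t * \<iota>)) = cnj (omega n1 ^ s) ^ \<kappa> * cnj (omega n2 ^ t) ^ \<iota>"
  by (simp add: power_mult)

lemma lin_id: fixes a b c a' b' X Y :: complex
  shows "(a - c*b) * X + (a' - c*b') * Y = (a*X + a'*Y) - c*(b*X + b'*Y)"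
  by algebra

theorem mainTheorem4:
  fixes n1 n2 s t :: nat and l1 l2 k :: real
  assumes "n1 \<ge> 3" and "n2 \<ge> 3" and "l1 > 0" and "l2 > 0"
    and "s < n1" and "t < n2" and "k \<noteq> 0"
  shows "is_eigenvalue_Hst n1 n2 l1 l2 s t (k^2) \<longleftrightarrow> Sigma_st n1 n2 l1 l2 s t k = 0"
proof -
  have n1: "n1 \<ge> 1" and n2: "n2 \<ge> 1" using assms by auto
  have l1: "l1 > 0" and l2: "l2 > 0" and k: "k \<noteq> 0" using assms by auto
  define al where "al = cnj (omega n1 ^ s)"
  define be where "be = cnj (omega n2 ^ t)"
  define p where "p = al ^ (n1 - 1)"
  define q where "q = be ^ (n2 - 1)"
  have aln: "al ^ n1 = 1" and alp: "al * p = 1" and alpa: "al + p = complex_of_real (2 * cos (2*pi*real s/real n1))"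
    using root_facts[OF n1, of s] unfolding al_def p_def by auto
  have ben: "be ^ n2 = 1" and beq: "be * q = 1" and beqb: "be + q = complex_of_real (2 * cos (2*pi*real t/real n2))"
    using root_facts[OF n2, of t] unfolding be_def q_def by auto
  have p0: "p \<noteq> 0" using alp by auto
  have q0: "q \<noteq> 0" using beq by auto
  define c1 where "c1 = complex_of_real (cos (k*l1))"
  define s1 where "s1 = complex_of_real (sin (k*l1))"
  define c2 where "c2 = complex_of_real (cos (k*l2))"
  define s2 where "s2 = complex_of_real (sin (k*l2))"
  define Kr where "Kr = sin (k*l2) * (2 * cos (2 * pi * real s / real n1) - 2 * cos (k*l1))
                    + sin (k*l1) * (2 * cos (2 * pi * real t / real n2) - 2 * cos (k*l2))"
  have sigK: "Sigma_st n1 n2 l1 l2 s t k = 0 \<longleftrightarrow> Kr = 0"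
  proof -
    have "Sigma_st n1 n2 l1 l2 s t k = \<i> * cis (k*l1) * cis (k*l2) * complex_of_real Kr"
      by (simp only: sigma_K Kr_def)
    then show ?thesis by simp
  qed
  define det0 where "det0 = q * s2 * (1-p*c1)^2 + p * s1 * (1-q*c2)^2 + p * q * s1 * s2 * (p * s1 + q * s2)"
  have detK: "det0 = p * q * complex_of_real Kr"
  proof -
    have "det0 = p * q * (s2 * (al + p - 2*c1) + s1 * (be + q - 2*c2))"
      unfolding det0_def by (rule det_K) (simp_all add: c1_def s1_def c2_def s2_def pyth_c alp beq)
    also have "\<dots> = p * q * complex_of_real Kr"
      unfolding alpa beqb Kr_def c1_def s1_def c2_def s2_def by simp
    finally show ?thesis .
  qed
  have detiff: "det0 = 0 \<longleftrightarrow> Kr = 0" using detK p0 q0 by simp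
  have trg0: "trg k A B 0 = A" for A B by (simp add: trg_def)
  have dtrg0: "dtrg k A B 0 = complex_of_real k * B" for A B by (simp add: dtrg_def)
  have trgl1: "trg k A B l1 = A * c1 + B * s1" for A B by (simp add: trg_def c1_def s1_def)
  have trgl2: "trg k A B l2 = A * c2 + B * s2" for A B by (simp add: trg_def c2_def s2_def)
  have dtrgl1: "dtrg k A B l1 = complex_of_real k * (B * c1 - A * s1)" for A B by (simp add: dtrg_def c1_def s1_def)
  have dtrgl2: "dtrg k A B l2 = complex_of_real k * (B * c2 - A * s2)" for A B by (simp add: dtrg_def c2_def s2_def)
  have almod: "al ^ ((i + n1 - 1) mod n1) = al ^ i * p" for i
    using pow_mod_eq[OF aln, of "i + n1 - 1"] n1 unfolding p_def by (simp add: power_add[symmetric])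
  have bemod: "be ^ ((j + n2 - 1) mod n2) = be ^ j * q" for j
    using pow_mod_eq[OF ben, of "j + n2 - 1"] n2 unfolding q_def by (simp add: power_add[symmetric])
  show ?thesis
  proof
    assume "is_eigenvalue_Hst n1 n2 l1 l2 s t (k^2)"
    then obtain f f' f'' where
      H: "\<forall>e\<in>edges n1 n2. H2_edge (elen l1 l2 e) (f e) (f' e) (f'' e)" and
      std: "std_conditions n1 n2 l1 l2 f f'" and
      inF: "in_F n1 n2 l1 l2 s t f" and
      nz: "\<exists>e\<in>edges n1 n2. \<not> (AE x in lebesgue. x \<in> {0..elen l1 l2 e} \<longrightarrow> f e x = 0)" and
      ev: "\<forall>e\<in>edges n1 n2. AE x in lebesgue. x \<in> {0..elen l1 l2 e} \<longrightarrow> - f'' e x = of_real (k^2) * f e x"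
      unfolding is_eigenvalue_Hst_def by (elim exE conjE) (rule that; assumption)
    have cf: "f e x = trg k (f e 0) (f' e 0 / of_real k) x \<and> f' e x = dtrg k (f e 0) (f' e 0 / of_real k) x"
      if e: "e \<in> edges n1 n2" and x: "x \<in> {0..elen l1 l2 e}" for e x
      unfolding trg_def dtrg_def
      by (rule ode_closed[OF k]) (use H ev e x in auto)
    have epos: "elen l1 l2 e > 0" for e using l1 l2 by (cases e) auto
    have inF': "AE x in lebesgue. x \<in> {0..elen l1 l2 e} \<longrightarrow> f (act n1 n2 \<kappa> \<iota> e) x = cnj (omega n1 ^ (s * \<kappa>) * omega n2 ^ (t * \<iota>)) * f e x"
      if "e \<in> edges n1 n2" for \<kappa> \<iota> e
      using inF that unfolding in_F_def by blast
    have symm: "f e1 0 = c * f e0 0 \<and> f' e1 0 / of_real k = c * (f' e0 0 / of_real k)"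
      if e0: "e0 \<in> edges n1 n2" and e1: "e1 \<in> edges n1 n2" and el: "elen l1 l2 e1 = elen l1 l2 e0"
        and ae: "AE x in lebesgue. x \<in> {0..elen l1 l2 e0} \<longrightarrow> f e1 x = c * f e0 x" for e0 e1 c
    proof -
      have "AE x in lebesgue. x \<in> {0..elen l1 l2 e0} \<longrightarrow> (f e1 0 - c * f e0 0) * of_real (cos (k*x)) + (f' e1 0 / of_real k - c * (f' e0 0 / of_real k)) * of_real (sin (k*x)) = 0"
      proof (rule AE_mp[OF ae], rule AE_I2, intro impI)
        fix x assume h: "x \<in> {0..elen l1 l2 e0} \<longrightarrow> f e1 x = c * f e0 x" and xL: "x \<in> {0..elen l1 l2 e0}"
        have xL1: "x \<in> {0..elen l1 l2 e1}" using xL el by simp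
        have a: "f e1 x = trg k (f e1 0) (f' e1 0 / of_real k) x" using cf[OF e1 xL1] by (rule conjunct1)
        have b: "f e0 x = trg k (f e0 0) (f' e0 0 / of_real k) x" using cf[OF e0 xL] by (rule conjunct1)
        have "(f e1 0 - c * f e0 0) * of_real (cos (k*x)) + (f' e1 0 / of_real k - c * (f' e0 0 / of_real k)) * of_real (sin (k*x))
            = trg k (f e1 0) (f' e1 0 / of_real k) x - c * trg k (f e0 0) (f' e0 0 / of_real k) x"
          unfolding trg_def by (rule lin_id)
        also have "\<dots> = 0" using h xL by (simp add: a[symmetric] b[symmetric])
        finally show "(f e1 0 - c * f e0 0) * of_real (cos (k*x)) + (f' e1 0 / of_real k - c * (f' e0 0 / of_real k)) * of_real (sin (k*x)) = 0" .
      qed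
      from trig_ae_zero[OF epos k this] show ?thesis by simp
    qed
    have mem: "Hor 0 0 \<in> edges n1 n2" "Hor (n1-1) 0 \<in> edges n1 n2" "Ver 0 0 \<in> edges n1 n2" "Ver 0 (n2-1) \<in> edges n1 n2"
      using n1 n2 by (simp_all add: edges_mem)
    have actH: "act n1 n2 (n1-1) 0 (Hor 0 0) = Hor (n1-1) 0" using n1 n2 by simp
    have actV: "act n1 n2 0 (n2-1) (Ver 0 0) = Ver 0 (n2-1)" using n1 n2 by simp
    have cnjp: "cnj (omega n1 ^ (s * (n1-1)) * omega n2 ^ (t * 0)) = p"
      unfolding cnj_fac al_def[symmetric] be_def[symmetric] p_def by simp
    have cnjq: "cnj (omega n1 ^ (s * 0) * omega n2 ^ (t * (n2-1))) = q"
      unfolding cnj_fac al_def[symmetric] be_def[symmetric] q_def by simp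
    have symH: "f (Hor (n1-1) 0) 0 = p * f (Hor 0 0) 0 \<and> f' (Hor (n1-1) 0) 0 / of_real k = p * (f' (Hor 0 0) 0 / of_real k)"
      by (rule symm[OF mem(1) mem(2)]) (use inF'[of "Hor 0 0" "n1-1" 0, OF mem(1)] in \<open>simp_all only: actH cnjp elen.simps\<close>)
    have symV: "f (Ver 0 (n2-1)) 0 = q * f (Ver 0 0) 0 \<and> f' (Ver 0 (n2-1)) 0 / of_real k = q * (f' (Ver 0 0) 0 / of_real k)"
      by (rule symm[OF mem(3) mem(4)]) (use inF'[of "Ver 0 0" 0 "n2-1", OF mem(3)] in \<open>simp_all only: actV cnjq elen.simps\<close>)
    have st: "f (Hor 0 0) 0 = f (Hor (n1-1) 0) l1 \<and> f (Hor 0 0) 0 = f (Ver 0 0) 0 \<and> f (Hor 0 0) 0 = f (Ver 0 (n2-1)) l2 \<and>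
        f' (Hor 0 0) 0 - f' (Hor (n1-1) 0) l1 + f' (Ver 0 0) 0 - f' (Ver 0 (n2-1)) l2 = 0"
    proof -
      have p1: "0 < n1" and p2: "0 < n2" using n1 n2 by auto
      have m1: "(0 + n1 - 1) mod n1 = n1 - 1" using n1 by simp
      have m2: "(0 + n2 - 1) mod n2 = n2 - 1" using n2 by simp
      show ?thesis using std[unfolded std_conditions_def, rule_format, of 0 0, OF p1 p2] unfolding m1 m2 .
    qed
    have st1: "f (Hor 0 0) 0 = f (Hor (n1-1) 0) l1" using st by (elim conjE) assumption
    have st2: "f (Hor 0 0) 0 = f (Ver 0 0) 0" using st by (elim conjE) assumption
    have st3: "f (Hor 0 0) 0 = f (Ver 0 (n2-1)) l2" using st by (elim conjE) assumption
    have st4: "f' (Hor 0 0) 0 - f' (Hor (n1-1) 0) l1 + f' (Ver 0 0) 0 - f' (Ver 0 (n2-1)) l2 = 0"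
      using st by (elim conjE) assumption
    define A where "A = f (Hor 0 0) 0"
    define B where "B = f' (Hor 0 0) 0 / of_real k"
    define C where "C = f (Ver 0 0) 0"
    define D where "D = f' (Ver 0 0) 0 / of_real k"
    have kB: "f' (Hor 0 0) 0 = of_real k * B" using k by (simp add: B_def)
    have kD: "f' (Ver 0 0) 0 = of_real k * D" using k by (simp add: D_def)
    have CA: "C = A" unfolding A_def C_def using st2 by (rule sym)
    have l1m: "l1 \<in> {0..elen l1 l2 (Hor (n1-1) 0)}" using l1 by simp
    have l2m: "l2 \<in> {0..elen l1 l2 (Ver 0 (n2-1))}" using l2 by simp
    have fHm: "f (Hor (n1-1) 0) l1 = trg k (p * A) (p * B) l1" "f' (Hor (n1-1) 0) l1 = dtrg k (p * A) (p * B) l1"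
      using cf[OF mem(2) l1m] symH k by (simp_all add: A_def B_def)
    have fVm: "f (Ver 0 (n2-1)) l2 = trg k (q * A) (q * D) l2" "f' (Ver 0 (n2-1)) l2 = dtrg k (q * A) (q * D) l2"
      using cf[OF mem(4) l2m] symV CA k by (simp_all add: C_def D_def)
    have E1: "(1 - p*c1) * A - p * s1 * B = 0"
    proof -
      have "A = f (Hor (n1-1) 0) l1" using st1 unfolding A_def .
      also have "\<dots> = p * A * c1 + p * B * s1" unfolding fHm(1) trgl1 by (simp only: mult_ac)
      finally have "A = p * A * c1 + p * B * s1" .
      moreover have "(1 - p*c1) * A - p * s1 * B = A - (p * A * c1 + p * B * s1)" by algebra
      ultimately show ?thesis by simp
    qed
    have E2: "(1 - q*c2) * A - q * s2 * D = 0"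
    proof -
      have "A = f (Ver 0 (n2-1)) l2" using st3 unfolding A_def .
      also have "\<dots> = q * A * c2 + q * D * s2" unfolding fVm(1) trgl2 by (simp only: mult_ac)
      finally have "A = q * A * c2 + q * D * s2" .
      moreover have "(1 - q*c2) * A - q * s2 * D = A - (q * A * c2 + q * D * s2)" by algebra
      ultimately show ?thesis by simp
    qed
    have E3: "(p * s1 + q * s2) * A + (1 - p*c1) * B + (1 - q*c2) * D = 0"
    proof -
      have "0 = f' (Hor 0 0) 0 - f' (Hor (n1-1) 0) l1 + f' (Ver 0 0) 0 - f' (Ver 0 (n2-1)) l2" using st4 by (rule sym)
      also have "\<dots> = of_real k * B - of_real k * (p * B * c1 - p * A * s1) + of_real k * D - of_real k * (q * D * c2 - q * A * s2)"
        unfolding kB kD fHm(2) fVm(2) dtrgl1 dtrgl2 by (simp only: mult_ac)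
      also have "\<dots> = of_real k * ((p * s1 + q * s2) * A + (1 - p*c1) * B + (1 - q*c2) * D)" by algebra
      finally show ?thesis using k by simp
    qed
    have nz3: "A \<noteq> 0 \<or> B \<noteq> 0 \<or> D \<noteq> 0"
    proof (rule ccontr)
      assume "\<not> (A \<noteq> 0 \<or> B \<noteq> 0 \<or> D \<noteq> 0)"
      then have z: "A = 0" "B = 0" "D = 0" by auto
      have zH: "f (Hor 0 0) x = 0" if "x \<in> {0..l1}" for x
        using cf[OF mem(1), of x] that z k by (simp add: A_def B_def trg_def)
      have zV: "f (Ver 0 0) x = 0" if "x \<in> {0..l2}" for x
        using cf[OF mem(3), of x] that z CA k by (simp add: C_def D_def trg_def)
      from nz obtain e where e: "e \<in> edges n1 n2" and ne: "\<not> (AE x in lebesgue. x \<in> {0..elen l1 l2 e} \<longrightarrow> f e x = 0)"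
        by blast
      show False
      proof (cases e)
        case (Hor i j)
        then have ij: "i < n1" "j < n2" using e by (simp_all add: edges_mem)
        have "AE x in lebesgue. x \<in> {0..elen l1 l2 (Hor 0 0)} \<longrightarrow> f (act n1 n2 i j (Hor 0 0)) x = cnj (omega n1 ^ (s * i) * omega n2 ^ (t * j)) * f (Hor 0 0) x"
          by (rule inF'[OF mem(1)])
        then have "AE x in lebesgue. x \<in> {0..elen l1 l2 e} \<longrightarrow> f e x = 0"
          by (rule AE_mp, intro AE_I2 impI) (use ij Hor zH in auto)
        then show False using ne by simp
      next
        case (Ver i j)
        then have ij: "i < n1" "j < n2" using e by (simp_all add: edges_mem)
        have "AE x in lebesgue. x \<in> {0..elen l1 l2 (Ver 0 0)} \<longrightarrow> f (act n1 n2 i j (Ver 0 0)) x = cnj (omega n1 ^ (s * i) * omega n2 ^ (t * j)) * f (Ver 0 0) x"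
          by (rule inF'[OF mem(3)])
        then have "AE x in lebesgue. x \<in> {0..elen l1 l2 e} \<longrightarrow> f e x = 0"
          by (rule AE_mp, intro AE_I2 impI) (use ij Ver zV in auto)
        then show False using ne by simp
      qed
    qed
    have "det0 * A = 0" "det0 * B = 0" "det0 * D = 0"
      using detA[OF E1 E2 E3] unfolding det0_def by auto
    then have "det0 = 0" using nz3 by auto
    then show "Sigma_st n1 n2 l1 l2 s t k = 0" using detiff sigK by simp
  next
    assume "Sigma_st n1 n2 l1 l2 s t k = 0"
    then have "det0 = 0" using sigK detiff by simp
    then have d0: "q * s2 * (1-p*c1)^2 + p * s1 * (1-q*c2)^2 + p * q * s1 * s2 * (p * s1 + q * s2) = 0"
      unfolding det0_def .
    have "\<exists>A B D. (A \<noteq> 0 \<or> B \<noteq> 0 \<or> D \<noteq> 0) \<and>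
     (1 - p*c1) * A - p * s1*B = 0 \<and>
     (1 - q*c2) * A - q * s2*D = 0 \<and>
     (p * s1 + q * s2) * A + (1 - p*c1) * B + (1 - q*c2) * D = 0"
      by (rule null_vec[OF p0 q0 d0])
    then obtain A B D where X: "(A \<noteq> 0 \<or> B \<noteq> 0 \<or> D \<noteq> 0) \<and>
     (1 - p*c1) * A - p * s1*B = 0 \<and>
     (1 - q*c2) * A - q * s2*D = 0 \<and>
     (p * s1 + q * s2) * A + (1 - p*c1) * B + (1 - q*c2) * D = 0"
      by (elim exE)
    have nz: "A \<noteq> 0 \<or> B \<noteq> 0 \<or> D \<noteq> 0" using X by (rule conjunct1)
    have E1: "(1 - p*c1) * A - p * s1 * B = 0" using X by (elim conjE)
    have E2: "(1 - q*c2) * A - q * s2 * D = 0" using X by (elim conjE)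
    have E3: "(p * s1 + q * s2) * A + (1 - p*c1) * B + (1 - q*c2) * D = 0" using X by (elim conjE)
    define f where "f = (\<lambda>e x. case e of Hor i j \<Rightarrow> al^i * be^j * trg k A B x | Ver i j \<Rightarrow> al^i * be^j * trg k A D x)"
    define f' where "f' = (\<lambda>e x. case e of Hor i j \<Rightarrow> al^i * be^j * dtrg k A B x | Ver i j \<Rightarrow> al^i * be^j * dtrg k A D x)"
    define f'' where "f'' = (\<lambda>e x. case e of Hor i j \<Rightarrow> - complex_of_real (k^2) * (al^i * be^j * trg k A B x)
                                         | Ver i j \<Rightarrow> - complex_of_real (k^2) * (al^i * be^j * trg k A D x))"
    have H: "\<forall>e\<in>edges n1 n2. H2_edge (elen l1 l2 e) (f e) (f' e) (f'' e)"
    proof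
      fix e show "H2_edge (elen l1 l2 e) (f e) (f' e) (f'' e)"
      proof (cases e)
        case (Hor i j)
        show ?thesis unfolding Hor f_def f'_def f''_def cedge.case by (rule h2_trg)
      next
        case (Ver i j)
        show ?thesis unfolding Ver f_def f'_def f''_def cedge.case by (rule h2_trg)
      qed
    qed
    have A1: "A = p * (A * c1 + B * s1)"
    proof -
      have "A - p * (A * c1 + B * s1) = (1 - p*c1) * A - p * s1 * B" by algebra
      then show ?thesis using E1 by simp
    qed
    have A2: "A = q * (A * c2 + D * s2)"
    proof -
      have "A - q * (A * c2 + D * s2) = (1 - q*c2) * A - q * s2 * D" by algebra
      then show ?thesis using E2 by simp
    qed
    have std: "std_conditions n1 n2 l1 l2 f f'"
      unfolding std_conditions_def
    proof (intro allI impI conjI)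
      fix i j assume i: "i < n1" and j: "j < n2"
      have "f (Hor i j) 0 = al^i * be^j * A" unfolding f_def cedge.case trg0 ..
      also have "\<dots> = al^i * be^j * (p * (A * c1 + B * s1))" by (simp only: A1[symmetric])
      also have "\<dots> = f (Hor ((i + n1 - 1) mod n1) j) l1"
        unfolding f_def cedge.case almod trgl1 by (simp only: mult_ac)
      finally show "f (Hor i j) 0 = f (Hor ((i + n1 - 1) mod n1) j) l1" .
      show "f (Hor i j) 0 = f (Ver i j) 0"
        unfolding f_def by (simp add: trg0)
      have "f (Hor i j) 0 = al^i * be^j * A" unfolding f_def cedge.case trg0 ..
      also have "\<dots> = al^i * be^j * (q * (A * c2 + D * s2))" by (simp only: A2[symmetric])
      also have "\<dots> = f (Ver i ((j + n2 - 1) mod n2)) l2"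
        unfolding f_def cedge.case bemod trgl2 by (simp only: mult_ac)
      finally show "f (Hor i j) 0 = f (Ver i ((j + n2 - 1) mod n2)) l2" .
      have "f' (Hor i j) 0 - f' (Hor ((i + n1 - 1) mod n1) j) l1 + f' (Ver i j) 0 - f' (Ver i ((j + n2 - 1) mod n2)) l2
        = al^i * be^j * (complex_of_real k * B) - al^i * p * be^j * (complex_of_real k * (B * c1 - A * s1))
          + al^i * be^j * (complex_of_real k * D) - al^i * (be^j * q) * (complex_of_real k * (D * c2 - A * s2))"
        unfolding f'_def cedge.case almod bemod dtrg0 dtrgl1 dtrgl2 by (rule refl)
      also have "\<dots> = al^i * be^j * complex_of_real k * ((p * s1 + q * s2) * A + (1 - p*c1) * B + (1 - q*c2) * D)"
        by algebra
      also have "\<dots> = 0" using E3 by simp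
      finally show "f' (Hor i j) 0 - f' (Hor ((i + n1 - 1) mod n1) j) l1 + f' (Ver i j) 0 - f' (Ver i ((j + n2 - 1) mod n2)) l2 = 0" .
    qed
    have inF: "in_F n1 n2 l1 l2 s t f"
      unfolding in_F_def
    proof (intro allI ballI AE_I2 impI)
      fix \<kappa> \<iota> e x
      have ak: "al ^ ((i + \<kappa>) mod n1) = al ^ \<kappa> * al ^ i" for i
        using pow_mod_eq[OF aln, of "i + \<kappa>"] by (simp add: power_add mult.commute)
      have bk: "be ^ ((j + \<iota>) mod n2) = be ^ \<iota> * be ^ j" for j
        using pow_mod_eq[OF ben, of "j + \<iota>"] by (simp add: power_add mult.commute)
      show "f (act n1 n2 \<kappa> \<iota> e) x = cnj (omega n1 ^ (s * \<kappa>) * omega n2 ^ (t * \<iota>)) * f e x"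
        unfolding cnj_fac al_def[symmetric] be_def[symmetric]
        by (cases e) (simp_all add: f_def ak bk mult_ac)
    qed
    have ev: "\<forall>e\<in>edges n1 n2. AE x in lebesgue. x \<in> {0..elen l1 l2 e} \<longrightarrow> - f'' e x = of_real (k^2) * f e x"
    proof (intro ballI AE_I2 impI)
      fix e x show "- f'' e x = of_real (k^2) * f e x"
        by (cases e) (simp_all add: f_def f''_def)
    qed
    have nzf: "\<exists>e\<in>edges n1 n2. \<not> (AE x in lebesgue. x \<in> {0..elen l1 l2 e} \<longrightarrow> f e x = 0)"
    proof (cases "A \<noteq> 0 \<or> B \<noteq> 0")
      case True
      have "\<not> (AE x in lebesgue. x \<in> {0..elen l1 l2 (Hor 0 0)} \<longrightarrow> f (Hor 0 0) x = 0)"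
      proof
        assume "AE x in lebesgue. x \<in> {0..elen l1 l2 (Hor 0 0)} \<longrightarrow> f (Hor 0 0) x = 0"
        then have "AE x in lebesgue. x \<in> {0..l1} \<longrightarrow> A * of_real (cos (k*x)) + B * of_real (sin (k*x)) = 0"
          by (simp add: f_def trg_def)
        from trig_ae_zero[OF l1 k this] True show False by simp
      qed
      moreover have "Hor 0 0 \<in> edges n1 n2" using n1 n2 by (simp add: edges_mem)
      ultimately show ?thesis by blast
    next
      case False
      then have A0: "A = 0" and D0: "D \<noteq> 0" using nz by auto
      have "\<not> (AE x in lebesgue. x \<in> {0..elen l1 l2 (Ver 0 0)} \<longrightarrow> f (Ver 0 0) x = 0)"
      proof
        assume "AE x in lebesgue. x \<in> {0..elen l1 l2 (Ver 0 0)} \<longrightarrow> f (Ver 0 0) x = 0"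
        then have "AE x in lebesgue. x \<in> {0..l2} \<longrightarrow> A * of_real (cos (k*x)) + D * of_real (sin (k*x)) = 0"
          by (simp add: f_def trg_def)
        from trig_ae_zero[OF l2 k this] D0 show False by simp
      qed
      moreover have "Ver 0 0 \<in> edges n1 n2" using n1 n2 by (simp add: edges_mem)
      ultimately show ?thesis by blast
    qed
    show "is_eigenvalue_Hst n1 n2 l1 l2 s t (k^2)"
      unfolding is_eigenvalue_Hst_def
      apply (rule exI[where x=f], rule exI[where x=f'], rule exI[where x=f''])
      using H std inF nzf ev by (intro conjI)
  qed
qed

end
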